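(* Let $X$ be a set and $\{X_i\}_{i\in I}$ a family of subsets of $X$. Let $Y$ be the simplicial graph with vertex set $X$ in which two distinct points are adjacent iff some $X_i$ contains both. Suppose that (1) $Y$ has no infinite cliques; (2) any finite pairwise intersecting subfamily of $\{X_i\}$ has nonempty intersection; (3) for any pairwise intersecting $X_{i_1},X_{i_2},X_{i_3}$ there exists $X_{i_0}$ in the family with $(X_{i_1}\cap X_{i_2})\cup(X_{i_2}\cap X_{i_3})\cup(X_{i_3}\cap X_{i_1})\subseteq X_{i_0}$. Then $Y$ is finitely clique Helly.
   Context: A graph is finitely clique Helly if every finite pairwise intersecting family of maximal cliques (viewed as vertex sets) has nonempty intersection. *)

theory Defs
  imports Main
begin

definition is_clique :: "'a set \<Rightarrow> ('a \<Rightarrow> 'a \<Rightarrow> bool) \<Rightarrow> 'a set \<Rightarrow> bool" where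
  "is_clique V E C \<longleftrightarrow> C \<subseteq> V \<and> (\<forall>x\<in>C. \<forall>y\<in>C. x \<noteq> y \<longrightarrow> E x y)"

definition is_maximal_clique :: "'a set \<Rightarrow> ('a \<Rightarrow> 'a \<Rightarrow> bool) \<Rightarrow> 'a set \<Rightarrow> bool" where
  "is_maximal_clique V E C \<longleftrightarrow> is_clique V E C \<and> (\<forall>D. is_clique V E D \<and> C \<subseteq> D \<longrightarrow> D = C)"

definition finitely_clique_Helly :: "'a set \<Rightarrow> ('a \<Rightarrow> 'a \<Rightarrow> bool) \<Rightarrow> bool" where
  "finitely_clique_Helly V E \<longleftrightarrow>
     (\<forall>F. finite F \<and> (\<forall>C\<in>F. is_maximal_clique V E C)
          \<and> (\<forall>C\<in>F. \<forall>D\<in>F. C \<inter> D \<noteq> {}) \<longrightarrow> \<Inter>F \<noteq> {})"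

definition family_adj :: "'i set \<Rightarrow> ('i \<Rightarrow> 'a set) \<Rightarrow> 'a \<Rightarrow> 'a \<Rightarrow> bool" where
  "family_adj I Xs x y \<longleftrightarrow> x \<noteq> y \<and> (\<exists>i\<in>I. x \<in> Xs i \<and> y \<in> Xs i)"

end

theory Submission
  imports Defs
begin

lemma clique_in_member:
  fixes X :: "'a set" and I :: "'i set" and Xs :: "'i \<Rightarrow> 'a set"
  assumes tri: "\<forall>i1\<in>I. \<forall>i2\<in>I. \<forall>i3\<in>I.
                Xs i1 \<inter> Xs i2 \<noteq> {} \<and> Xs i2 \<inter> Xs i3 \<noteq> {} \<and> Xs i3 \<inter> Xs i1 \<noteq> {}
                \<longrightarrow> (\<exists>i0\<in>I. (Xs i1 \<inter> Xs i2) \<union> (Xs i2 \<inter> Xs i3) \<union> (Xs i3 \<inter> Xs i1) \<subseteq> Xs i0)"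
  shows "\<forall>K. finite K \<and> card K = n + 2 \<and> is_clique X (family_adj I Xs) K \<longrightarrow> (\<exists>i\<in>I. K \<subseteq> Xs i)"
proof (induction n)
  case 0
  show ?case
  proof (intro allI impI)
    fix K assume h: "finite K \<and> card K = 0 + 2 \<and> is_clique X (family_adj I Xs) K"
    then obtain x y where K: "K = {x, y}" "x \<noteq> y" by (metis add_0 card_2_iff)
    with h have "family_adj I Xs x y" unfolding is_clique_def by auto
    then show "\<exists>i\<in>I. K \<subseteq> Xs i" using K unfolding family_adj_def by auto
  qed
next
  case (Suc n)
  show ?case
  proof (intro allI impI)
    fix K assume h: "finite K \<and> card K = Suc n + 2 \<and> is_clique X (family_adj I Xs) K"
    then have fK: "finite K" and cK: "card K = Suc n + 2" and clK: "is_clique X (family_adj I Xs) K" by auto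
    have sub_cl: "\<And>L. L \<subseteq> K \<Longrightarrow> is_clique X (family_adj I Xs) L"
      using clK unfolding is_clique_def by blast
    have "K \<noteq> {}" using cK by auto
    then obtain x1 where x1: "x1 \<in> K" by blast
    have c1: "card (K - {x1}) = n + 2" using cK x1 fK by simp
    have "K - {x1} \<noteq> {}"
    proof
      assume "K - {x1} = {}"
      with c1 show False by simp
    qed
    then obtain x2 where x2: "x2 \<in> K - {x1}" by blast
    have c2: "card (K - {x1} - {x2}) = Suc n" using c1 x2 fK by simp
    have "K - {x1} - {x2} \<noteq> {}"
    proof
      assume "K - {x1} - {x2} = {}"
      with c2 show False by simp
    qed
    then obtain x3 where x3: "x3 \<in> K - {x1} - {x2}" by blast
    have cc: "\<And>x. x \<in> K \<Longrightarrow> card (K - {x}) = n + 2" using cK fK by simp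
    have IH: "\<And>L. L \<subseteq> K \<Longrightarrow> card L = n + 2 \<Longrightarrow> \<exists>i\<in>I. L \<subseteq> Xs i"
    proof -
      fix L assume L: "L \<subseteq> K" "card L = n + 2"
      have "finite L" using L(1) fK by (rule finite_subset)
      then show "\<exists>i\<in>I. L \<subseteq> Xs i" using Suc.IH L sub_cl[OF L(1)] by blast
    qed
    have x1': "x1 \<notin> K - {x1}" and x2K: "x2 \<in> K" and x3K: "x3 \<in> K"
      and d12: "x1 \<noteq> x2" and d13: "x1 \<noteq> x3" and d23: "x2 \<noteq> x3" using x2 x3 by auto
    obtain a where a: "a \<in> I" "K - {x1} \<subseteq> Xs a"
      using IH[of "K - {x1}"] cc[OF x1] by blast
    obtain b where b: "b \<in> I" "K - {x2} \<subseteq> Xs b"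
      using IH[of "K - {x2}"] cc[OF x2K] by blast
    obtain c where c: "c \<in> I" "K - {x3} \<subseteq> Xs c"
      using IH[of "K - {x3}"] cc[OF x3K] by blast
    have m3: "x3 \<in> Xs a \<inter> Xs b" using a(2) b(2) x3K d13 d23 by blast
    have m1: "x1 \<in> Xs b \<inter> Xs c" using b(2) c(2) x1 d12 d13 by blast
    have m2: "x2 \<in> Xs c \<inter> Xs a" using a(2) c(2) x2K d12 d23 by blast
    have ne: "Xs a \<inter> Xs b \<noteq> {} \<and> Xs b \<inter> Xs c \<noteq> {} \<and> Xs c \<inter> Xs a \<noteq> {}"
      using m1 m2 m3 by blast
    obtain i0 where i0: "i0 \<in> I" "(Xs a \<inter> Xs b) \<union> (Xs b \<inter> Xs c) \<union> (Xs c \<inter> Xs a) \<subseteq> Xs i0"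
      using tri[rule_format, OF a(1) b(1) c(1) ne] by blast
    have "K \<subseteq> Xs i0"
    proof
      fix z assume z: "z \<in> K"
      show "z \<in> Xs i0"
      proof (cases "z = x1")
        case True then show ?thesis using m1 i0(2) by blast
      next
        case n1: False
        show ?thesis
        proof (cases "z = x2")
          case True then show ?thesis using m2 i0(2) by blast
        next
          case False
          then have "z \<in> Xs a \<inter> Xs b" using z n1 a(2) b(2) by blast
          then show ?thesis using i0(2) by blast
        qed
      qed
    qed
    then show "\<exists>i\<in>I. K \<subseteq> Xs i" using i0 by blast
  qed
qed

theorem lemma3p3:
  fixes X :: "'a set" and I :: "'i set" and Xs :: "'i \<Rightarrow> 'a set"
  assumes sub: "\<forall>i\<in>I. Xs i \<subseteq> X"
    and no_inf_clique: "\<forall>C. is_clique X (family_adj I Xs) C \<longrightarrow> finite C"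
    and helly: "\<forall>J. finite J \<and> J \<noteq> {} \<and> J \<subseteq> I \<and> (\<forall>i\<in>J. \<forall>j\<in>J. Xs i \<inter> Xs j \<noteq> {})
                  \<longrightarrow> (\<Inter>i\<in>J. Xs i) \<noteq> {}"
    and tri: "\<forall>i1\<in>I. \<forall>i2\<in>I. \<forall>i3\<in>I.
                Xs i1 \<inter> Xs i2 \<noteq> {} \<and> Xs i2 \<inter> Xs i3 \<noteq> {} \<and> Xs i3 \<inter> Xs i1 \<noteq> {}
                \<longrightarrow> (\<exists>i0\<in>I. (Xs i1 \<inter> Xs i2) \<union> (Xs i2 \<inter> Xs i3) \<union> (Xs i3 \<inter> Xs i1) \<subseteq> Xs i0)"
  shows "finitely_clique_Helly X (family_adj I Xs)"
  unfolding finitely_clique_Helly_def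
proof (intro allI impI)
  fix F assume hF: "finite F \<and> (\<forall>C\<in>F. is_maximal_clique X (family_adj I Xs) C) \<and> (\<forall>C\<in>F. \<forall>D\<in>F. C \<inter> D \<noteq> {})"
  then have fF: "finite F" and mF: "\<forall>C\<in>F. is_maximal_clique X (family_adj I Xs) C"
    and pF: "\<forall>C\<in>F. \<forall>D\<in>F. C \<inter> D \<noteq> {}" by auto
  have Xcl: "\<And>i. i \<in> I \<Longrightarrow> is_clique X (family_adj I Xs) (Xs i)"
    using sub unfolding is_clique_def family_adj_def by blast
  show "\<Inter>F \<noteq> {}"
  proof (cases "\<exists>C\<in>F. \<not> (\<exists>i\<in>I. C = Xs i)")
    case True
    then obtain C where C: "C \<in> F" "\<forall>i\<in>I. C \<noteq> Xs i" by blast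
    have mc: "is_maximal_clique X (family_adj I Xs) C" using mF C by blast
    then have cl: "is_clique X (family_adj I Xs) C" unfolding is_maximal_clique_def by blast
    then have fC: "finite C" using no_inf_clique by blast
    have ne: "C \<noteq> {}" using pF C by blast
    have "\<not> card C \<ge> 2"
    proof
      assume "card C \<ge> 2"
      then obtain n where "card C = n + 2" by (metis add.commute le_Suc_ex)
      then obtain i where i: "i \<in> I" "C \<subseteq> Xs i"
        using clique_in_member[OF tri, of n X] fC cl by blast
      then have "Xs i = C" using mc Xcl[OF i(1)] unfolding is_maximal_clique_def by blast
      then show False using C i by blast
    qed
    then have "card C = 1" using ne fC by (metis One_nat_def Suc_1 card_0_eq not_less_eq_eq le_eq_less_or_eq less_Suc0 not_less)
    then obtain x where x: "C = {x}" using card_1_singletonE by blast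
    have "\<forall>D\<in>F. x \<in> D" using pF C x by blast
    then show ?thesis by blast
  next
    case False
    then have allX: "\<forall>C\<in>F. \<exists>i\<in>I. C = Xs i" by blast
    show ?thesis
    proof (cases "F = {}")
      case True then show ?thesis by simp
    next
      case Fne: False
      define g where "g C = (SOME i. i \<in> I \<and> C = Xs i)" for C
      have g: "\<And>C. C \<in> F \<Longrightarrow> g C \<in> I \<and> C = Xs (g C)"
        unfolding g_def using allX by (metis (mono_tags, lifting) someI_ex)
      have J: "finite (g ` F) \<and> g ` F \<noteq> {} \<and> g ` F \<subseteq> I \<and> (\<forall>i\<in>g ` F. \<forall>j\<in>g ` F. Xs i \<inter> Xs j \<noteq> {})"
        using fF Fne g pF by auto
      have eq: "(\<Inter>i\<in>g ` F. Xs i) = \<Inter>F"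
        using g by auto
      show ?thesis using helly J eq by metis
    qed
  qed
qed

end
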